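(* Assume the standing assumptions below with $\beta=0$ and $\xi\ge0$. (a) If $(\theta^k,u^k,w^k)$ solves one step (D1)–(D3) of the time-discrete scheme, then a.e. in $\Omega$ $$u^k=P_{[0,1]}\Big(\frac{g^k}{\mu/\tau+\xi}\Big),\qquad g^k:=\frac{\mu}{\tau}u^{k-1}+\gamma*u^k+c_Fm(\theta^{k-1})-\frac{c_F}{2}.$$ (b) (Steady state.) If $u\in\mathcal K$ and a measurable $\theta:\Omega\to\mathbb{R}$ satisfy $(Bu-c_Fu+c_F/2-c_Fm(\theta),\zeta-u)\ge0$ for all $\zeta\in\mathcal K$, then for $\xi>0$, $u=P_{[0,1]}\big(\xi^{-1}(\gamma*u-c_F/2+c_Fm(\theta))\big)$ a.e. in $\Omega$; and if $\xi=0$ and the set $\{x\in\Omega:\gamma*u(x)-c_F/2+c_Fm(\theta(x))=0\}$ has measure zero, then $u(x)\in\{0,1\}$ for a.e. $x\in\Omega$.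
   Context: Standing assumptions. $\Omega\subset\mathbb{R}^n$, $n\le 3$, bounded domain. Kernel $\gamma:\mathbb{R}^n\to[0,\infty)$ with $\gamma\in L^1(\mathbb{R}^n)$, $\gamma(x)=\hat\gamma(|x|)$, $(0,\sigma)\subset\operatorname{supp}\hat\gamma\subset(0,\delta]$ for some $\sigma,\delta>0$. $\Omega_I=\{y\in\mathbb{R}^n\setminus\Omega:\gamma(x-y)\ne0\text{ for some }x\in\Omega\}$; functions are extended by zero outside $\Omega\cup\Omega_I$, $\gamma*u(x)=\int_{\Omega\cup\Omega_I}\gamma(x-y)u(y)dy$. $c_\gamma=\int_{\Omega\cup\Omega_I}\gamma(x-y)dy$ (constant for $x\in\Omega$). $Bu=c_\gamma u-\gamma*u$, i.e. $Bu(x)=\int_{\Omega\cup\Omega_I}(u(x)-u(y))\gamma(x-y)dy$; $\mathcal Nu$ is the same integral on $\Omega_I$. $V_B=\{v\in L^2(\Omega\cup\Omega_I):\mathcal Nv=0\text{ on }\Omega_I\}$, $\mathcal K=\{v\in V_B:0\le v\le 1\text{ a.e. in }\Omega\}$. $(\cdot,\cdot)$ is the $L^2(\Omega)$ inner product. Parameters $D>0$, $L\in\mathbb{R}$, $\mu>0$, $c_F>0$, $\tau>0$, $\xi:=c_\gamma-c_F$; $m:\mathbb{R}\to\mathbb{R}$ with $|m|\le1/2$, $|m'|\le C_m$. With $\beta=0$, $V_A=L^2(\Omega)$ and the time-discrete scheme reads: given $\theta^{k-1}\in H^1(\Omega)$, $u^{k-1}\in\mathcal K$, find $(\theta^k,u^k,w^k)\in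 H^1(\Omega)\times\mathcal K\times L^2(\Omega)$ with (D1) $(\theta^k-\theta^{k-1},\phi)+D\tau(\nabla\theta^k,\nabla\phi)-L(u^k-u^{k-1},\phi)=0$ for all $\phi\in H^1(\Omega)$; (D2) $\mu(u^k-u^{k-1},\psi)+\tau(w^k,\psi)=0$ for all $\psi\in L^2(\Omega)$; (D3) $(Bu^k-c_Fu^k+c_F/2-c_Fm(\theta^{k-1})-w^k,\zeta-u^k)\ge0$ for all $\zeta\in\mathcal K$. $P_{[0,1]}(s)=\min\{1,\max\{0,s\}\}$ pointwise. *)

theory Defs
  imports "HOL-Analysis.Analysis"
begin

text \<open>f belongs to L2(S): f restricted to S is Lebesgue measurable and f squared is integrable on S.
  Functions are identified with their restriction to S (values outside S are irrelevant).\<close>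
definition L2 :: "'a::euclidean_space set \<Rightarrow> ('a \<Rightarrow> real) \<Rightarrow> bool" where
  "L2 S f \<longleftrightarrow> (\<lambda>x. indicator S x * f x) \<in> borel_measurable lebesgue
              \<and> set_integrable lebesgue S (\<lambda>x. (f x)\<^sup>2)"

definition ip :: "'a::euclidean_space set \<Rightarrow> ('a \<Rightarrow> real) \<Rightarrow> ('a \<Rightarrow> real) \<Rightarrow> real" where
  "ip S f g = (LINT x:S|lebesgue. f x * g x)"

definition ddir :: "'a::euclidean_space \<Rightarrow> ('a \<Rightarrow> real) \<Rightarrow> 'a \<Rightarrow> real" where
  "ddir v f x = deriv (\<lambda>t. f (x + t *\<^sub>R v)) 0"

definition iter_partial :: "'a::euclidean_space list \<Rightarrow> ('a \<Rightarrow> real) \<Rightarrow> 'a \<Rightarrow> real" where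
  "iter_partial ds f = foldr ddir ds f"

definition smooth_fun :: "('a::euclidean_space \<Rightarrow> real) \<Rightarrow> bool" where
  "smooth_fun f \<longleftrightarrow> (\<forall>ds. set ds \<subseteq> Basis \<longrightarrow>
       continuous_on UNIV (iter_partial ds f) \<and>
       (\<forall>v\<in>Basis. \<forall>x. (\<lambda>t. iter_partial ds f (x + t *\<^sub>R v)) differentiable (at 0)))"

definition test_fun :: "'a::euclidean_space set \<Rightarrow> ('a \<Rightarrow> real) \<Rightarrow> bool" where
  "test_fun \<Omega> \<phi> \<longleftrightarrow> smooth_fun \<phi> \<and> compact (closure {x. \<phi> x \<noteq> 0})
                     \<and> closure {x. \<phi> x \<noteq> 0} \<subseteq> \<Omega>"

definition weak_grad :: "'a::euclidean_space set \<Rightarrow> ('a \<Rightarrow> real) \<Rightarrow> ('a \<Rightarrow> 'a) \<Rightarrow> bool" where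
  "weak_grad \<Omega> f G \<longleftrightarrow> (\<forall>\<phi>. test_fun \<Omega> \<phi> \<longrightarrow> (\<forall>i\<in>Basis.
       (LINT x:\<Omega>|lebesgue. f x * ddir i \<phi> x) = - (LINT x:\<Omega>|lebesgue. (G x \<bullet> i) * \<phi> x)))"

definition H1 :: "'a::euclidean_space set \<Rightarrow> ('a \<Rightarrow> real) \<Rightarrow> ('a \<Rightarrow> 'a) \<Rightarrow> bool" where
  "H1 \<Omega> f G \<longleftrightarrow> L2 \<Omega> f \<and> (\<forall>i\<in>Basis. L2 \<Omega> (\<lambda>x. G x \<bullet> i)) \<and> weak_grad \<Omega> f G"

definition ip_grad :: "'a::euclidean_space set \<Rightarrow> ('a \<Rightarrow> 'a) \<Rightarrow> ('a \<Rightarrow> 'a) \<Rightarrow> real" where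
  "ip_grad S F G = (LINT x:S|lebesgue. F x \<bullet> G x)"

definition interaction_dom :: "'a::euclidean_space set \<Rightarrow> ('a \<Rightarrow> real) \<Rightarrow> 'a set" where
  "interaction_dom \<Omega> \<gamma> = {y. y \<notin> \<Omega> \<and> (\<exists>x\<in>\<Omega>. \<gamma> (x - y) \<noteq> 0)}"

definition conv :: "('a::euclidean_space \<Rightarrow> real) \<Rightarrow> 'a set \<Rightarrow> ('a \<Rightarrow> real) \<Rightarrow> 'a \<Rightarrow> real" where
  "conv \<gamma> U u x = (LINT y:U|lebesgue. \<gamma> (x - y) * u y)"

text \<open>The nonlocal operator: integral over U of (u(x)-u(y)) gamma(x-y) dy.
  On Omega this is Bu, on Omega_I it is Nu.\<close>
definition nonloc :: "('a::euclidean_space \<Rightarrow> real) \<Rightarrow> 'a set \<Rightarrow> ('a \<Rightarrow> real) \<Rightarrow> 'a \<Rightarrow> real" where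
  "nonloc \<gamma> U u x = (LINT y:U|lebesgue. (u x - u y) * \<gamma> (x - y))"

definition V_B :: "'a::euclidean_space set \<Rightarrow> ('a \<Rightarrow> real) \<Rightarrow> ('a \<Rightarrow> real) set" where
  "V_B \<Omega> \<gamma> = {v. L2 (\<Omega> \<union> interaction_dom \<Omega> \<gamma>) v \<and>
     (AE x in lebesgue. x \<in> interaction_dom \<Omega> \<gamma> \<longrightarrow>
        nonloc \<gamma> (\<Omega> \<union> interaction_dom \<Omega> \<gamma>) v x = 0)}"

definition Kset :: "'a::euclidean_space set \<Rightarrow> ('a \<Rightarrow> real) \<Rightarrow> ('a \<Rightarrow> real) set" where
  "Kset \<Omega> \<gamma> = {v \<in> V_B \<Omega> \<gamma>. AE x in lebesgue. x \<in> \<Omega> \<longrightarrow> 0 \<le> v x \<and> v x \<le> 1}"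

definition P01 :: "real \<Rightarrow> real" where
  "P01 s = min 1 (max 0 s)"

end

theory Submission
  imports Defs
begin


lemma distr_reflect: "distr lborel borel (\<lambda>y. x - y) = (lborel :: 'a::euclidean_space measure)"
proof -
  have "lborel = density (distr lborel borel (\<lambda>y. x + (-1::real) *\<^sub>R y)) (\<lambda>_. \<bar>-1::real\<bar>^DIM('a))"
    by (rule lborel_affine) simp
  then show ?thesis by (simp add: density_1)
qed

lemma nn_integral_reflect:
  fixes f :: "'a::euclidean_space \<Rightarrow> ennreal"
  assumes "f \<in> borel_measurable borel"
  shows "(\<integral>\<^sup>+y. f (x - y) \<partial>lborel) = (\<integral>\<^sup>+z. f z \<partial>lborel)"
proof -
  have "(\<integral>\<^sup>+z. f z \<partial>lborel) = (\<integral>\<^sup>+z. f z \<partial>(distr lborel borel (\<lambda>y. x - y)))"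
    by (simp add: distr_reflect)
  also have "\<dots> = (\<integral>\<^sup>+y. f (x - y) \<partial>lborel)"
    by (subst nn_integral_distr) (use assms in auto)
  finally show ?thesis ..
qed

lemma nn_integral_transl:
  fixes f :: "'a::euclidean_space \<Rightarrow> ennreal"
  assumes "f \<in> borel_measurable borel"
  shows "(\<integral>\<^sup>+x. f (x - y) \<partial>lborel) = (\<integral>\<^sup>+z. f z \<partial>lborel)"
proof -
  have "(\<integral>\<^sup>+z. f z \<partial>lborel) = (\<integral>\<^sup>+z. f z \<partial>(distr lborel borel ((+) (-y))))"
    by (simp add: lborel_distr_plus)
  also have "\<dots> = (\<integral>\<^sup>+x. f (x - y) \<partial>lborel)"
    by (subst nn_integral_distr) (use assms in auto)
  finally show ?thesis ..
qed

lemma AE_reflect_lborel: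
  fixes x :: "'a::euclidean_space"
  assumes "AE z in lborel. P z"
  shows "AE y in lborel. P (x - y)"
proof -
  obtain N where N: "N \<in> null_sets lborel" "{z \<in> space lborel. \<not> P z} \<subseteq> N"
    using AE_E[OF assms] by (metis null_setsI)
  have "emeasure lborel ((\<lambda>y. x - y) -` N \<inter> space lborel) = emeasure (distr lborel borel (\<lambda>y. x - y)) N"
    using N by (subst emeasure_distr) auto
  also have "\<dots> = 0" using N by (simp add: distr_reflect null_setsD1)
  finally have "(\<lambda>y. x - y) -` N \<inter> space lborel \<in> null_sets lborel"
    using N measurable_sets_borel[of "\<lambda>y. x - y" borel N] by (auto simp: null_sets_def)
  then show ?thesis
    by (rule AE_I') (use N in auto)
qed

lemma AE_reflect_lebesgue:
  fixes x :: "'a::euclidean_space"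
  assumes "AE z in lebesgue. P z"
  shows "AE y in lebesgue. P (x - y)"
  using AE_reflect_lborel[of P x] assms by (simp add: AE_completion_iff)

lemma lebesgue_meas_AE:
  fixes f g :: "'a::euclidean_space \<Rightarrow> real"
  assumes "g \<in> borel_measurable lebesgue" "AE x in lebesgue. f x = g x"
  shows "f \<in> borel_measurable lebesgue"
proof (rule measurableI)
  fix B :: "real set" assume B: "B \<in> sets borel"
  have "g -` B \<inter> space lebesgue \<in> sets lebesgue" using measurable_sets[OF assms(1) B] .
  moreover have ae: "AE x in lebesgue. x \<in> g -` B \<inter> space lebesgue \<longleftrightarrow> x \<in> f -` B \<inter> space lebesgue"
    using assms(2) by (rule eventually_mono) auto
  ultimately show "f -` B \<inter> space lebesgue \<in> sets (lebesgue :: 'a measure)"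
    using completion.in_sets_AE[OF ae] by simp
qed auto

lemma meas_test:
  fixes g :: "'a::euclidean_space \<Rightarrow> real"
  assumes [measurable]: "g \<in> borel_measurable borel" "v \<in> borel_measurable borel"
  shows "(\<lambda>(x,y). g (x - y) * v y) \<in> borel_measurable (lborel \<Otimes>\<^sub>M lborel)"
  by measurable




context
  fixes \<Omega> :: "'a::euclidean_space set" and \<gamma> g :: "'a \<Rightarrow> real"
  assumes Om_open: "open \<Omega>" and Om_bdd: "bounded \<Omega>"
    and g_borel[measurable]: "g \<in> borel_measurable borel" and g_nn: "\<And>x. 0 \<le> g x"
    and g_int: "integrable lborel g"
    and gam_g: "AE x in lebesgue. \<gamma> x = g x"
    and I_borel[measurable]: "interaction_dom \<Omega> \<gamma> \<in> sets borel"
    and I_bdd: "bounded (interaction_dom \<Omega> \<gamma>)"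
begin

abbreviation "U \<equiv> \<Omega> \<union> interaction_dom \<Omega> \<gamma>"

lemma Om_borel[measurable]: "\<Omega> \<in> sets borel"
  using Om_open by auto

lemma U_borel[measurable]: "U \<in> sets borel" by auto

lemma U_fin: "emeasure lborel U < \<infinity>"
  using Om_bdd I_bdd by (intro emeasure_bounded_finite) auto

lemma g_nn_fin: "(\<integral>\<^sup>+ z. ennreal (g z) \<partial>lborel) < \<infinity>"
  using g_int g_nn unfolding integrable_iff_bounded by simp

lemma gam_shift: "AE y in lebesgue. \<gamma> (x - y) = g (x - y)"
  using AE_reflect_lebesgue[OF gam_g] .

lemma conv_props:
  assumes vm: "(\<lambda>y. indicator U y * v y) \<in> borel_measurable lebesgue"
    and vi: "integrable lebesgue (\<lambda>y. indicator U y * v y)"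
  shows "AE x in lebesgue. set_integrable lebesgue U (\<lambda>y. \<gamma> (x - y) * v y)"
    and "conv \<gamma> U v \<in> borel_measurable lebesgue"
proof -
  obtain v' where v'm[measurable]: "v' \<in> borel_measurable lborel"
    and v'ae: "AE y in lborel. indicator U y * v y = v' y"
    using completion_ex_borel_measurable_real[OF vm] by blast
  have v'b[measurable]: "v' \<in> borel_measurable borel" using v'm by simp
  have v'ae2: "AE y in lebesgue. indicator U y * v y = v' y"
    using v'ae by (simp add: AE_completion_iff)
  have "integrable lebesgue v'"
    by (rule integrable_cong_AE_imp[OF vi measurable_completion[OF v'm] v'ae2])
  then have v'i: "integrable lborel v'"
    using integrable_completion[OF v'm] by simp
  have eqae: "AE y in lebesgue. indicator U y *\<^sub>R (\<gamma> (x - y) * v y) = g (x - y) * v' y" for x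
    using gam_shift[of x] v'ae2 by eventually_elim (auto simp: indicator_def)
  have gvm: "(\<lambda>y. g (x - y) * v' y) \<in> borel_measurable lebesgue" for x
    by (rule measurable_completion) measurable
  have lhsm: "(\<lambda>y. indicator U y *\<^sub>R (\<gamma> (x - y) * v y)) \<in> borel_measurable lebesgue" for x
    by (rule lebesgue_meas_AE[OF gvm eqae])
  have conv_eq: "conv \<gamma> U v x = (\<integral>y. g (x - y) * v' y \<partial>lborel)" for x
  proof -
    have "conv \<gamma> U v x = (\<integral>y. g (x - y) * v' y \<partial>lebesgue)"
      unfolding conv_def set_lebesgue_integral_def
      by (rule integral_cong_AE[OF lhsm gvm eqae])
    also have "\<dots> = (\<integral>y. g (x - y) * v' y \<partial>lborel)"
      by (rule integral_completion) measurable
    finally show ?thesis .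
  qed
  have "(\<lambda>x. \<integral>y. g (x - y) * v' y \<partial>lborel) \<in> borel_measurable lborel"
    by measurable
  then show "conv \<gamma> U v \<in> borel_measurable lebesgue"
    unfolding conv_eq by (rule measurable_completion)
  let ?f = "\<lambda>x y. ennreal (norm (g (x - y) * v' y))"
  have "(\<integral>\<^sup>+ x. (\<integral>\<^sup>+ y. ?f x y \<partial>lborel) \<partial>lborel) = (\<integral>\<^sup>+ y. (\<integral>\<^sup>+ x. ?f x y \<partial>lborel) \<partial>lborel)"
    by (rule lborel_pair.Fubini'[symmetric]) measurable
  also have "\<dots> = (\<integral>\<^sup>+ y. ennreal (norm (v' y)) * (\<integral>\<^sup>+ z. ennreal (g z) \<partial>lborel) \<partial>lborel)"
  proof (rule nn_integral_cong)
    fix y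
    have "(\<integral>\<^sup>+ x. ?f x y \<partial>lborel) = (\<integral>\<^sup>+ x. ennreal (norm (v' y)) * ennreal (g (x - y)) \<partial>lborel)"
      using g_nn by (intro nn_integral_cong) (auto simp: abs_mult ennreal_mult' mult.commute)
    also have "\<dots> = ennreal (norm (v' y)) * (\<integral>\<^sup>+ x. ennreal (g (x - y)) \<partial>lborel)"
      by (rule nn_integral_cmult) measurable
    also have "(\<integral>\<^sup>+ x. ennreal (g (x - y)) \<partial>lborel) = (\<integral>\<^sup>+ z. ennreal (g z) \<partial>lborel)"
      by (rule nn_integral_transl[of "\<lambda>z. ennreal (g z)"]) measurable
    finally show "(\<integral>\<^sup>+ x. ?f x y \<partial>lborel) = ennreal (norm (v' y)) * (\<integral>\<^sup>+ z. ennreal (g z) \<partial>lborel)" .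
  qed
  also have "\<dots> = (\<integral>\<^sup>+ y. ennreal (norm (v' y)) \<partial>lborel) * (\<integral>\<^sup>+ z. ennreal (g z) \<partial>lborel)"
    by (rule nn_integral_multc) measurable
  also have "\<dots> < \<infinity>"
    using v'i g_nn_fin unfolding integrable_iff_bounded by (simp add: ennreal_mult_less_top)
  finally have "AE x in lborel. (\<integral>\<^sup>+ y. ?f x y \<partial>lborel) \<noteq> \<infinity>"
    by (intro nn_integral_PInf_AE) auto
  then have "AE x in lebesgue. (\<integral>\<^sup>+ y. ?f x y \<partial>lborel) \<noteq> \<infinity>"
    by (simp add: AE_completion_iff)
  then show "AE x in lebesgue. set_integrable lebesgue U (\<lambda>y. \<gamma> (x - y) * v y)"
  proof eventually_elim
    case (elim x)
    have "integrable lborel (\<lambda>y. g (x - y) * v' y)"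
      using elim by (intro integrableI_bounded) (auto simp: top.not_eq_extremum)
    then have "integrable lebesgue (\<lambda>y. g (x - y) * v' y)"
      by (subst integrable_completion) measurable
    moreover have "(\<lambda>y. indicator U y *\<^sub>R (\<gamma> (x - y) * v y)) \<in> borel_measurable lebesgue"
      by (rule lebesgue_meas_AE[OF _ eqae[of x]]) (auto intro: measurable_completion)
    ultimately show ?case
      unfolding set_integrable_def
      by (rule integrable_cong_AE_imp) (use eqae[of x] in \<open>auto elim: eventually_mono\<close>)
  qed
qed

lemma I_disj: "\<Omega> \<inter> interaction_dom \<Omega> \<gamma> = {}"
  by (auto simp: interaction_dom_def)

lemma g_shift_int: "integrable lborel (\<lambda>y. g (x - y))"
proof -
  have "(\<integral>\<^sup>+ y. ennreal (norm (g (x - y))) \<partial>lborel) = (\<integral>\<^sup>+ z. ennreal (g z) \<partial>lborel)"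
    using g_nn nn_integral_reflect[of "\<lambda>z. ennreal (g z)" x] by simp
  then show ?thesis using g_nn_fin by (intro integrableI_bounded) auto
qed

lemma extension:
  assumes hm: "(\<lambda>x. indicator \<Omega> x * h x) \<in> borel_measurable lebesgue"
    and hb: "AE x in lebesgue. x \<in> \<Omega> \<longrightarrow> 0 \<le> h x \<and> h x \<le> 1"
  shows "\<exists>\<zeta>\<in>Kset \<Omega> \<gamma>. AE x in lebesgue. x \<in> \<Omega> \<longrightarrow> \<zeta> x = h x"
proof -
  define I where "I = interaction_dom \<Omega> \<gamma>"
  have I_m[measurable]: "I \<in> sets borel" unfolding I_def by simp
  have disj: "\<Omega> \<inter> I = {}" unfolding I_def using I_disj .
  obtain h' where h'm: "h' \<in> borel_measurable lborel"
    and h'ae: "AE y in lborel. indicator \<Omega> y * h y = h' y"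
    using completion_ex_borel_measurable_real[OF hm] by blast
  have h'b[measurable]: "h' \<in> borel_measurable borel" using h'm by simp
  define hh where "hh y = indicator \<Omega> y * max 0 (min 1 (h' y))" for y
  have hh_m[measurable]: "hh \<in> borel_measurable borel" unfolding hh_def by measurable
  have hh01: "0 \<le> hh y" "hh y \<le> 1" for y by (auto simp: hh_def indicator_def)
  have hh0: "y \<notin> \<Omega> \<Longrightarrow> hh y = 0" for y by (simp add: hh_def)
  have h'ae2: "AE y in lebesgue. indicator \<Omega> y * h y = h' y"
    using h'ae by (simp add: AE_completion_iff)
  have hh_ae: "AE x in lebesgue. x \<in> \<Omega> \<longrightarrow> hh x = h x"
    using hb h'ae2
  proof eventually_elim
    case (elim x)
    show ?case
    proof
      assume x: "x \<in> \<Omega>"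
      then have "h' x = h x" using elim(2) x by (metis indicator_simps(1) mult_1)
      then show "hh x = h x" using x elim(1) unfolding hh_def by (simp add: max_def min_def)
    qed
  qed
  define H where "H y = ennreal (hh y)" for y
  have H_m[measurable]: "H \<in> borel_measurable borel" unfolding H_def by measurable
  define G where "G x y = ennreal (g (x - y))" for x y
  have G_m[measurable]: "case_prod G \<in> borel_measurable (lborel \<Otimes>\<^sub>M lborel)"
    unfolding G_def by measurable
  define c where "c x = (\<integral>\<^sup>+y. G x y * indicator U y \<partial>lborel)" for x
  define T where "T v x = (\<integral>\<^sup>+y. G x y * (H y + indicator I y * v y) \<partial>lborel) / c x"
    for v :: "'a \<Rightarrow> ennreal" and x
  define vs where "vs n = (T ^^ n) (\<lambda>_. 0)" for n
  have c_m[measurable]: "c \<in> borel_measurable borel"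
  proof -
    have "c \<in> borel_measurable lborel" unfolding c_def by measurable
    then show ?thesis by simp
  qed
  have c_fin: "c x < \<infinity>" for x
  proof -
    have "c x \<le> (\<integral>\<^sup>+y. G x y \<partial>lborel)"
      unfolding c_def by (intro nn_integral_mono) (auto simp: indicator_def)
    also have "\<dots> = (\<integral>\<^sup>+ z. ennreal (g z) \<partial>lborel)"
      unfolding G_def by (rule nn_integral_reflect) measurable
    finally show ?thesis using g_nn_fin by (simp add: le_less_trans)
  qed
  have T_m: "v \<in> borel_measurable borel \<Longrightarrow> T v \<in> borel_measurable borel" for v
  proof -
    assume [measurable]: "v \<in> borel_measurable borel"
    have "(\<lambda>x. \<integral>\<^sup>+y. G x y * (H y + indicator I y * v y) \<partial>lborel) \<in> borel_measurable lborel"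
      by measurable
    then have [measurable]: "(\<lambda>x. \<integral>\<^sup>+y. G x y * (H y + indicator I y * v y) \<partial>lborel) \<in> borel_measurable borel"
      by simp
    show ?thesis unfolding T_def[abs_def] by measurable
  qed
  have T_mono: "(\<And>y. v y \<le> w y) \<Longrightarrow> T v x \<le> T w x" for v w x
    unfolding T_def
    by (intro divide_right_mono_ennreal nn_integral_mono mult_left_mono add_left_mono)
       (auto simp: indicator_def)
  have int_le_c: "(\<And>y. v y \<le> 1) \<Longrightarrow> (\<integral>\<^sup>+y. G x y * (H y + indicator I y * v y) \<partial>lborel) \<le> c x" for v x
    unfolding c_def
  proof (intro nn_integral_mono mult_left_mono)
    fix y assume v1: "\<And>y. v y \<le> 1"
    show "H y + indicator I y * v y \<le> indicator U y"
    proof (cases "y \<in> \<Omega>")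
      case True then have "y \<notin> I" using disj by auto
      then show ?thesis using True hh01[of y] by (simp add: H_def I_def)
    next
      case False then show ?thesis using v1[of y] hh0[of y] by (auto simp: H_def I_def indicator_def)
    qed
  qed simp
  have T_le1: "(\<And>y. v y \<le> 1) \<Longrightarrow> T v x \<le> 1" for v x
  proof -
    assume v1: "\<And>y. v y \<le> 1"
    show ?thesis
    proof (cases "c x = 0")
      case True
      then have "(\<integral>\<^sup>+y. G x y * (H y + indicator I y * v y) \<partial>lborel) = 0"
        using int_le_c[OF v1, of x] by simp
      then show ?thesis by (simp add: T_def)
    next
      case False
      have "T v x \<le> c x / c x"
        unfolding T_def by (intro divide_right_mono_ennreal int_le_c v1)
      also have "\<dots> = 1" using False c_fin[of x] by simp
      finally show ?thesis .
    qed
  qed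
  have vs_m[measurable]: "vs n \<in> borel_measurable borel" for n
    by (induction n) (auto simp: vs_def intro: T_m)
  have vs_le1: "vs n y \<le> 1" for n y
    by (induction n arbitrary: y) (auto simp: vs_def intro: T_le1)
  have vs_Suc: "vs (Suc n) = T (vs n)" for n by (simp add: vs_def)
  have vs_inc: "vs n y \<le> vs (Suc n) y" for n y
  proof (induction n arbitrary: y)
    case 0 then show ?case by (simp add: vs_def)
  next
    case (Suc n) then show ?case unfolding vs_Suc[of "Suc n"] vs_Suc[of n] by (intro T_mono)
  qed
  have vs_mono: "incseq (\<lambda>n. vs n y)" for y
    by (intro incseq_SucI vs_inc)
  define v where "v y = (SUP n. vs n y)" for y
  have v_m[measurable]: "v \<in> borel_measurable borel" unfolding v_def by measurable
  have v_le1: "v y \<le> 1" for y unfolding v_def by (intro SUP_least vs_le1)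
  have v_fix: "T v x = v x" for x
  proof -
    let ?F = "\<lambda>n y. G x y * (H y + indicator I y * vs n y)"
    have inc: "incseq ?F"
      by (intro incseq_SucI le_funI mult_left_mono add_left_mono) (auto intro: vs_inc)
    have "(\<integral>\<^sup>+y. G x y * (H y + indicator I y * v y) \<partial>lborel) = (\<integral>\<^sup>+y. (SUP n. ?F n y) \<partial>lborel)"
      unfolding v_def
      by (intro nn_integral_cong)
         (simp add: SUP_mult_left_ennreal ennreal_SUP_add_right)
    also have "\<dots> = (SUP n. \<integral>\<^sup>+y. ?F n y \<partial>lborel)"
      by (rule nn_integral_monotone_convergence_SUP[OF inc]) (unfold G_def, measurable)
    finally have "T v x = (SUP n. \<integral>\<^sup>+y. ?F n y \<partial>lborel) / c x"
      by (simp add: T_def)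
    also have "\<dots> = (SUP n. (\<integral>\<^sup>+y. ?F n y \<partial>lborel) / c x)"
      by (simp add: divide_ennreal_def SUP_mult_right_ennreal)
    also have "\<dots> = (SUP n. vs (Suc n) x)"
      by (simp add: vs_Suc T_def)
    also have "\<dots> = v x"
      unfolding v_def
    proof (rule antisym)
      show "(SUP n. vs (Suc n) x) \<le> (SUP n. vs n x)"
        by (intro SUP_least SUP_upper2[of "Suc _"]) auto
      show "(SUP n. vs n x) \<le> (SUP n. vs (Suc n) x)"
        by (intro SUP_mono) (use vs_inc in blast)
    qed
    finally show ?thesis .
  qed
  define \<zeta> where "\<zeta> y = hh y + indicator I y * enn2real (v y)" for y
  have \<zeta>_m[measurable]: "\<zeta> \<in> borel_measurable borel" unfolding \<zeta>_def by measurable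
  have v_fin: "v y < \<infinity>" for y using v_le1[of y] by (simp add: le_less_trans)
  have ev01: "0 \<le> enn2real (v y)" "enn2real (v y) \<le> 1" for y
    using enn2real_mono[OF v_le1[of y]] by auto
  have \<zeta>_Om: "y \<in> \<Omega> \<Longrightarrow> \<zeta> y = hh y" for y using disj by (auto simp: \<zeta>_def indicator_def)
  have \<zeta>_I: "y \<in> I \<Longrightarrow> \<zeta> y = enn2real (v y)" for y using disj hh0[of y] by (auto simp: \<zeta>_def)
  have \<zeta>01: "0 \<le> \<zeta> y \<and> \<zeta> y \<le> 1" for y
  proof (cases "y \<in> I")
    case True then show ?thesis using \<zeta>_I ev01 by auto
  next
    case False then show ?thesis using hh01[of y] by (simp add: \<zeta>_def)
  qed
  have \<zeta>_enn: "ennreal (indicator U y * \<zeta> y) = H y + indicator I y * v y" for y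
  proof (cases "y \<in> I")
    case True then have "y \<notin> \<Omega>" using disj by auto
    then show ?thesis using True \<zeta>_I[OF True] hh0[of y] v_fin[of y] by (simp add: H_def I_def)
  next
    case False then show ?thesis using hh0[of y] by (simp add: H_def \<zeta>_def I_def indicator_def)
  qed
  have N0: "nonloc \<gamma> U \<zeta> x = 0" if xI: "x \<in> I" for x
  proof -
    let ?R = "\<lambda>y. indicator U y * ((\<zeta> x - \<zeta> y) * g (x - y))"
    have Rm: "?R \<in> borel_measurable lebesgue" by (rule measurable_completion) measurable
    have ae: "AE y in lebesgue. indicator U y *\<^sub>R ((\<zeta> x - \<zeta> y) * \<gamma> (x - y)) = ?R y"
      using gam_shift[of x] by eventually_elim simp
    have "nonloc \<gamma> U \<zeta> x = (\<integral>y. ?R y \<partial>lebesgue)"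
      unfolding nonloc_def set_lebesgue_integral_def
      by (rule integral_cong_AE[OF lebesgue_meas_AE[OF Rm ae] Rm ae])
    also have "\<dots> = (\<integral>y. ?R y \<partial>lborel)"
      by (rule integral_completion) measurable
    finally have n1: "nonloc \<gamma> U \<zeta> x = (\<integral>y. ?R y \<partial>lborel)" .
    have i1: "integrable lborel (\<lambda>y. indicator U y * g (x - y))"
      using integrable_mult_indicator[OF _ g_shift_int[of x], of U] by simp
    have i2: "integrable lborel (\<lambda>y. indicator U y * \<zeta> y * g (x - y))"
    proof (rule Bochner_Integration.integrable_bound[OF i1])
      show "(\<lambda>y. indicator U y * \<zeta> y * g (x - y)) \<in> borel_measurable lborel" by measurable
      show "AE y in lborel. norm (indicator U y * \<zeta> y * g (x - y)) \<le> norm (indicator U y * g (x - y))"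
        using \<zeta>01 g_nn by (intro AE_I2) (auto simp: indicator_def abs_mult mult_left_le_one_le)
    qed
    have "(\<integral>y. ?R y \<partial>lborel) = (\<integral>y. \<zeta> x * (indicator U y * g (x - y)) - indicator U y * \<zeta> y * g (x - y) \<partial>lborel)"
      by (rule Bochner_Integration.integral_cong) (auto simp: algebra_simps)
    also have "\<dots> = \<zeta> x * (\<integral>y. indicator U y * g (x - y) \<partial>lborel) - (\<integral>y. indicator U y * \<zeta> y * g (x - y) \<partial>lborel)"
      using i1 i2 by simp
    finally have n2: "nonloc \<gamma> U \<zeta> x = \<zeta> x * (\<integral>y. indicator U y * g (x - y) \<partial>lborel) - (\<integral>y. indicator U y * \<zeta> y * g (x - y) \<partial>lborel)"
      using n1 by simp
    define S where "S = (\<integral>\<^sup>+y. G x y * (H y + indicator I y * v y) \<partial>lborel)"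
    have cA: "c x = ennreal (\<integral>y. indicator U y * g (x - y) \<partial>lborel)"
    proof -
      have "c x = (\<integral>\<^sup>+y. ennreal (indicator U y * g (x - y)) \<partial>lborel)"
        unfolding c_def G_def by (intro nn_integral_cong) (auto simp: indicator_def)
      also have "\<dots> = ennreal (\<integral>y. indicator U y * g (x - y) \<partial>lborel)"
        using g_nn by (intro nn_integral_eq_integral[OF i1]) auto
      finally show ?thesis .
    qed
    have SB: "S = ennreal (\<integral>y. indicator U y * \<zeta> y * g (x - y) \<partial>lborel)"
    proof -
      have "S = (\<integral>\<^sup>+y. ennreal (indicator U y * \<zeta> y * g (x - y)) \<partial>lborel)"
        unfolding S_def G_def
      proof (intro nn_integral_cong)
        fix y
        have "ennreal (indicator U y * \<zeta> y * g (x - y)) = ennreal (indicator U y * \<zeta> y) * ennreal (g (x - y))"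
          using \<zeta>01[of y] g_nn by (simp add: ennreal_mult')
        moreover have "ennreal (g (x - y)) * (H y + indicator I y * v y) = ennreal (g (x - y)) * ennreal (indicator U y * \<zeta> y)"
          by (simp only: \<zeta>_enn)
        ultimately show "ennreal (g (x - y)) * (H y + indicator I y * v y) = ennreal (indicator U y * \<zeta> y * g (x - y))"
          by (metis mult.commute)
      qed
      also have "\<dots> = ennreal (\<integral>y. indicator U y * \<zeta> y * g (x - y) \<partial>lborel)"
        using g_nn \<zeta>01 by (intro nn_integral_eq_integral[OF i2]) (auto simp: indicator_def)
      finally show ?thesis .
    qed
    have A0: "0 \<le> (\<integral>y. indicator U y * g (x - y) \<partial>lborel)"
      using g_nn by (intro integral_nonneg_AE) (auto simp: indicator_def)
    have B0: "0 \<le> (\<integral>y. indicator U y * \<zeta> y * g (x - y) \<partial>lborel)"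
      using g_nn \<zeta>01 by (intro integral_nonneg_AE AE_I2) (auto simp: indicator_def)
    have Sc: "S \<le> c x" unfolding S_def by (rule int_le_c[OF v_le1])
    have \<zeta>x: "\<zeta> x = enn2real (S / c x)"
      using \<zeta>_I[OF xI] v_fix[of x] by (simp add: T_def S_def)
    show ?thesis
    proof (cases "c x = 0")
      case True
      then have "S = 0" using Sc by simp
      then show ?thesis using True n2 cA SB A0 B0 by simp
    next
      case False
      have ic: "inverse (c x) * c x = 1"
        using ennreal_divide_self[OF False c_fin[of x, unfolded infinity_ennreal_def]] by (simp add: divide_ennreal_def mult.commute)
      have "S / c x * c x = S"
        by (simp add: divide_ennreal_def mult.assoc ic)
      then have "enn2real (S / c x) * enn2real (c x) = enn2real S"
        by (metis enn2real_mult)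
      then show ?thesis using n2 cA SB A0 B0 \<zeta>x by simp
    qed
  qed
  have "\<zeta> \<in> Kset \<Omega> \<gamma>"
    unfolding Kset_def V_B_def L2_def
  proof (intro CollectI conjI)
    show "(\<lambda>x. indicator U x * \<zeta> x) \<in> borel_measurable lebesgue"
      by (rule measurable_completion) measurable
    show "set_integrable lebesgue U (\<lambda>x. (\<zeta> x)\<^sup>2)"
      unfolding set_integrable_def
    proof (subst integrable_completion)
      show "(\<lambda>x. indicator U x *\<^sub>R (\<zeta> x)\<^sup>2) \<in> borel_measurable lborel" by measurable
      show "integrable lborel (\<lambda>x. indicator U x *\<^sub>R (\<zeta> x)\<^sup>2)"
        by (rule integrableI_bounded_set[where A=U and B=1])
           (use U_fin \<zeta>01 in \<open>auto simp: indicator_def power_le_one abs_le_iff\<close>)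
    qed
    show "AE x in lebesgue. x \<in> interaction_dom \<Omega> \<gamma> \<longrightarrow> nonloc \<gamma> U \<zeta> x = 0"
      using N0 by (auto simp: I_def)
    show "AE x in lebesgue. x \<in> \<Omega> \<longrightarrow> 0 \<le> \<zeta> x \<and> \<zeta> x \<le> 1"
      using \<zeta>01 by auto
  qed
  moreover have "AE x in lebesgue. x \<in> \<Omega> \<longrightarrow> \<zeta> x = h x"
    using hh_ae by eventually_elim (auto simp: \<zeta>_Om)
  ultimately show ?thesis by blast
qed

end

declare Om_borel[measurable del] U_borel[measurable del]




lemma rmeas_iff:
  fixes f :: "'a::euclidean_space \<Rightarrow> real"
  assumes "\<Omega> \<in> sets lebesgue"
  shows "f \<in> borel_measurable (restrict_space lebesgue \<Omega>) \<longleftrightarrow> (\<lambda>x. indicator \<Omega> x * f x) \<in> borel_measurable lebesgue"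
  using borel_measurable_restrict_space_iff[of \<Omega> lebesgue f] assms by simp

lemma AE_nonneg_from_sets:
  fixes f :: "'a::euclidean_space \<Rightarrow> real"
  assumes \<Omega>m: "\<Omega> \<in> sets lebesgue" and fin: "emeasure lebesgue \<Omega> < \<infinity>"
    and fm: "(\<lambda>x. indicator \<Omega> x * f x) \<in> borel_measurable lebesgue"
    and H: "\<And>A. A \<in> sets lebesgue \<Longrightarrow> A \<subseteq> \<Omega> \<Longrightarrow> set_integrable lebesgue A f \<Longrightarrow> (LINT x:A|lebesgue. f x) \<ge> 0"
  shows "AE x in lebesgue. x \<in> \<Omega> \<longrightarrow> 0 \<le> f x"
proof -
  define F where "F x = indicator \<Omega> x * f x" for x
  have Fm[measurable]: "F \<in> borel_measurable lebesgue" using fm unfolding F_def[abs_def] .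
  define A where "A n = {x. F x < 0 \<and> - F x \<le> real n}" for n :: nat
  have Am[measurable]: "A n \<in> sets lebesgue" for n
  proof -
    have "{x \<in> space lebesgue. F x < 0 \<and> - F x \<le> real n} \<in> sets lebesgue" by measurable
    then show ?thesis by (simp add: A_def)
  qed
  have AO: "A n \<subseteq> \<Omega>" for n by (auto simp: A_def F_def indicator_def split: if_splits)
  have AF: "x \<in> A n \<Longrightarrow> F x = f x" for x n using AO by (auto simp: F_def indicator_def)
  have null: "AE x in lebesgue. x \<notin> A n" for n
  proof -
    have eq: "(\<lambda>x. indicator (A n) x *\<^sub>R f x) = (\<lambda>x. indicator (A n) x * F x)"
      using AF by (auto simp: indicator_def)
    have fA: "emeasure lebesgue (A n) < \<infinity>"
      using emeasure_mono[OF AO[of n], of lebesgue] \<Omega>m fin by (simp add: le_less_trans)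
    have int: "integrable lebesgue (\<lambda>x. indicator (A n) x * F x)"
      by (rule integrableI_bounded_set[where A="A n" and B="real n"])
         (use fA Am[of n] in \<open>auto simp: A_def indicator_def\<close>)
    then have "set_integrable lebesgue (A n) f" unfolding set_integrable_def eq .
    from H[OF Am AO this] have ge: "0 \<le> (\<integral>x. indicator (A n) x * F x \<partial>lebesgue)"
      unfolding set_lebesgue_integral_def eq .
    have le: "0 \<le> (\<integral>x. - (indicator (A n) x * F x) \<partial>lebesgue)"
      by (intro integral_nonneg_AE AE_I2) (auto simp: A_def indicator_def)
    have "(\<integral>x. - (indicator (A n) x * F x) \<partial>lebesgue) = 0" using ge le by simp
    then have "AE x in lebesgue. - (indicator (A n) x * F x) = 0"
      using integral_nonneg_eq_0_iff_AE[of lebesgue "\<lambda>x. - (indicator (A n) x * F x)"] int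
      by (auto simp: A_def indicator_def)
    then show ?thesis by eventually_elim (auto simp: A_def indicator_def)
  qed
  have "AE x in lebesgue. \<forall>n. x \<notin> A n" using null by (simp add: AE_all_countable)
  then show ?thesis
  proof eventually_elim
    case (elim x)
    show ?case
    proof (intro impI, rule ccontr)
      assume x: "x \<in> \<Omega>" and "\<not> 0 \<le> f x"
      then have "F x < 0" by (simp add: F_def)
      moreover obtain n :: nat where "- F x \<le> real n" using real_arch_simple by blast
      ultimately have "x \<in> A n" by (simp add: A_def)
      then show False using elim by blast
    qed
  qed
qed

lemma loc:
  fixes K :: "('a::euclidean_space \<Rightarrow> real) set" and u F Fa :: "'a \<Rightarrow> real"
  assumes \<Omega>m: "\<Omega> \<in> sets lebesgue" and fin: "emeasure lebesgue \<Omega> < \<infinity>"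
    and ext: "\<And>h. (\<lambda>x. indicator \<Omega> x * h x) \<in> borel_measurable lebesgue \<Longrightarrow>
        (AE x in lebesgue. x \<in> \<Omega> \<longrightarrow> 0 \<le> h x \<and> h x \<le> 1) \<Longrightarrow>
        \<exists>\<zeta>\<in>K. AE x in lebesgue. x \<in> \<Omega> \<longrightarrow> \<zeta> x = h x"
    and um: "(\<lambda>x. indicator \<Omega> x * u x) \<in> borel_measurable lebesgue"
    and ub: "AE x in lebesgue. x \<in> \<Omega> \<longrightarrow> 0 \<le> u x \<and> u x \<le> 1"
    and Fam: "(\<lambda>x. indicator \<Omega> x * Fa x) \<in> borel_measurable lebesgue"
    and FF: "AE x in lebesgue. x \<in> \<Omega> \<longrightarrow> F x = Fa x"
    and VI: "\<forall>\<zeta>\<in>K. ip \<Omega> F (\<lambda>x. \<zeta> x - u x) \<ge> 0"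
  shows "AE x in lebesgue. x \<in> \<Omega> \<longrightarrow> (u x < 1 \<longrightarrow> 0 \<le> Fa x) \<and> (0 < u x \<longrightarrow> Fa x \<le> 0)"
proof -
  have uR[measurable]: "u \<in> borel_measurable (restrict_space lebesgue \<Omega>)" using um rmeas_iff[OF \<Omega>m] by blast
  have FR[measurable]: "Fa \<in> borel_measurable (restrict_space lebesgue \<Omega>)" using Fam rmeas_iff[OF \<Omega>m] by blast
  have key: "AE x in lebesgue. x \<in> \<Omega> \<longrightarrow> 0 \<le> Fa x * (t - u x)"
    if t: "t = 0 \<or> t = 1" for t :: real
  proof (rule AE_nonneg_from_sets[OF \<Omega>m fin])
    have "(\<lambda>x. Fa x * (t - u x)) \<in> borel_measurable (restrict_space lebesgue \<Omega>)" by measurable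
    then show "(\<lambda>x. indicator \<Omega> x * (Fa x * (t - u x))) \<in> borel_measurable lebesgue"
      using rmeas_iff[OF \<Omega>m, of "\<lambda>x. Fa x * (t - u x)"] by simp
    fix A assume Am[measurable]: "A \<in> sets lebesgue" and AO: "A \<subseteq> \<Omega>"
      and Ai: "set_integrable lebesgue A (\<lambda>x. Fa x * (t - u x))"
    define h where "h x = (if x \<in> A then t else u x)" for x
    have "(\<lambda>x. indicator \<Omega> x * h x) = (\<lambda>x. indicator A x * t + (1 - indicator A x) * (indicator \<Omega> x * u x))"
      using AO by (auto simp: h_def indicator_def fun_eq_iff)
    also have "\<dots> \<in> borel_measurable lebesgue" using um by measurable
    finally have hm: "(\<lambda>x. indicator \<Omega> x * h x) \<in> borel_measurable lebesgue" .
    have hb: "AE x in lebesgue. x \<in> \<Omega> \<longrightarrow> 0 \<le> h x \<and> h x \<le> 1"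
      using ub by eventually_elim (use t in \<open>auto simp: h_def\<close>)
    obtain \<zeta> where \<zeta>K: "\<zeta> \<in> K" and \<zeta>h: "AE x in lebesgue. x \<in> \<Omega> \<longrightarrow> \<zeta> x = h x"
      using ext[OF hm hb] by blast
    let ?R = "\<lambda>x. indicator A x *\<^sub>R (Fa x * (t - u x))"
    have Rm: "?R \<in> borel_measurable lebesgue" using Ai unfolding set_integrable_def by auto
    have ae: "AE x in lebesgue. indicator \<Omega> x *\<^sub>R (F x * (\<zeta> x - u x)) = ?R x"
      using \<zeta>h FF by eventually_elim (use AO in \<open>auto simp: h_def indicator_def\<close>)
    have "ip \<Omega> F (\<lambda>x. \<zeta> x - u x) = (\<integral>x. ?R x \<partial>lebesgue)"
      unfolding ip_def set_lebesgue_integral_def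
      by (rule integral_cong_AE[OF lebesgue_meas_AE[OF Rm ae] Rm ae])
    then show "(LINT x:A|lebesgue. Fa x * (t - u x)) \<ge> 0"
      using VI \<zeta>K unfolding set_lebesgue_integral_def by auto
  qed
  show ?thesis
    using key[of 0, simplified] key[of 1, simplified] ub
  proof eventually_elim
    case (elim x)
    show ?case
    proof (intro impI conjI)
      assume x: "x \<in> \<Omega>"
      show "u x < 1 \<Longrightarrow> 0 \<le> Fa x"
        using elim x by (simp add: zero_le_mult_iff)
      show "0 < u x \<Longrightarrow> Fa x \<le> 0"
        using elim x by (auto simp: zero_le_mult_iff mult_le_0_iff)
    qed
  qed
qed

lemma L2_prod_int:
  assumes f: "L2 S f" and h: "L2 S k"
  shows "set_integrable lebesgue S (\<lambda>x. f x * k x)"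
proof -
  have fm: "(\<lambda>x. indicator S x * f x) \<in> borel_measurable lebesgue"
    and fi: "integrable lebesgue (\<lambda>x. indicator S x *\<^sub>R (f x)\<^sup>2)"
    using f unfolding L2_def set_integrable_def by auto
  have km: "(\<lambda>x. indicator S x * k x) \<in> borel_measurable lebesgue"
    and ki: "integrable lebesgue (\<lambda>x. indicator S x *\<^sub>R (k x)\<^sup>2)"
    using h unfolding L2_def set_integrable_def by auto
  have eq: "(\<lambda>x. indicator S x *\<^sub>R (f x * k x)) = (\<lambda>x. (indicator S x * f x) * (indicator S x * k x))"
    by (auto simp: indicator_def fun_eq_iff)
  show ?thesis unfolding set_integrable_def
  proof (rule Bochner_Integration.integrable_bound[OF Bochner_Integration.integrable_add[OF fi ki]])
    show "(\<lambda>x. indicator S x *\<^sub>R (f x * k x)) \<in> borel_measurable lebesgue"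
      unfolding eq using fm km by measurable
    show "AE x in lebesgue. norm (indicator S x *\<^sub>R (f x * k x)) \<le> norm (indicator S x *\<^sub>R (f x)\<^sup>2 + indicator S x *\<^sub>R (k x)\<^sup>2)"
    proof (intro AE_I2)
      fix x
      have "0 \<le> (\<bar>f x\<bar> - \<bar>k x\<bar>)\<^sup>2" by simp
      then have "2 * (\<bar>f x\<bar> * \<bar>k x\<bar>) \<le> (f x)\<^sup>2 + (k x)\<^sup>2"
        by (simp add: power2_eq_square algebra_simps abs_mult_self_eq)
      moreover have "0 \<le> \<bar>f x\<bar> * \<bar>k x\<bar>" by simp
      ultimately have "\<bar>f x\<bar> * \<bar>k x\<bar> \<le> (f x)\<^sup>2 + (k x)\<^sup>2" by linarith
      then have "\<bar>f x * k x\<bar> \<le> (f x)\<^sup>2 + (k x)\<^sup>2" by (simp add: abs_mult)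
      then show "norm (indicator S x *\<^sub>R (f x * k x)) \<le> norm (indicator S x *\<^sub>R (f x)\<^sup>2 + indicator S x *\<^sub>R (k x)\<^sup>2)"
        by (auto simp: indicator_def)
    qed
  qed
qed

lemma L2_lin:
  assumes f: "L2 S f" and h: "L2 S k"
  shows "L2 S (\<lambda>x. a * f x + b * k x)"
proof -
  have fm: "(\<lambda>x. indicator S x * f x) \<in> borel_measurable lebesgue"
    and fi: "integrable lebesgue (\<lambda>x. indicator S x *\<^sub>R (f x)\<^sup>2)"
    using f unfolding L2_def set_integrable_def by auto
  have km: "(\<lambda>x. indicator S x * k x) \<in> borel_measurable lebesgue"
    and ki: "integrable lebesgue (\<lambda>x. indicator S x *\<^sub>R (k x)\<^sup>2)"
    using h unfolding L2_def set_integrable_def by auto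
  have eq: "(\<lambda>x. indicator S x * (a * f x + b * k x)) = (\<lambda>x. a * (indicator S x * f x) + b * (indicator S x * k x))"
    by (auto simp: indicator_def fun_eq_iff)
  have m: "(\<lambda>x. indicator S x * (a * f x + b * k x)) \<in> borel_measurable lebesgue"
    unfolding eq using fm km by measurable
  have eq2: "(\<lambda>x. indicator S x *\<^sub>R (a * f x + b * k x)\<^sup>2) = (\<lambda>x. (indicator S x * (a * f x + b * k x))\<^sup>2)"
    by (auto simp: indicator_def fun_eq_iff)
  have i: "integrable lebesgue (\<lambda>x. indicator S x *\<^sub>R (a * f x + b * k x)\<^sup>2)"
  proof (rule Bochner_Integration.integrable_bound[OF Bochner_Integration.integrable_add[OF
        integrable_mult_right[OF fi, of "2 * a\<^sup>2"] integrable_mult_right[OF ki, of "2 * b\<^sup>2"]]])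
    show "(\<lambda>x. indicator S x *\<^sub>R (a * f x + b * k x)\<^sup>2) \<in> borel_measurable lebesgue"
      unfolding eq2 using m by measurable
    show "AE x in lebesgue. norm (indicator S x *\<^sub>R (a * f x + b * k x)\<^sup>2) \<le>
        norm (2 * a\<^sup>2 * (indicator S x *\<^sub>R (f x)\<^sup>2) + 2 * b\<^sup>2 * (indicator S x *\<^sub>R (k x)\<^sup>2))"
    proof (intro AE_I2)
      fix x
      have "0 \<le> (a * f x - b * k x)\<^sup>2" by simp
      then have "(a * f x + b * k x)\<^sup>2 \<le> 2 * a\<^sup>2 * (f x)\<^sup>2 + 2 * b\<^sup>2 * (k x)\<^sup>2"
        by (simp add: power2_eq_square algebra_simps)
      then show "norm (indicator S x *\<^sub>R (a * f x + b * k x)\<^sup>2) \<le>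
        norm (2 * a\<^sup>2 * (indicator S x *\<^sub>R (f x)\<^sup>2) + 2 * b\<^sup>2 * (indicator S x *\<^sub>R (k x)\<^sup>2))"
        by (auto simp: indicator_def)
    qed
  qed
  show ?thesis unfolding L2_def set_integrable_def using m i by simp
qed

lemma ip_lin:
  assumes f: "L2 S f" and h: "L2 S k" and q: "L2 S q"
  shows "ip S (\<lambda>x. a * f x + b * k x) q = a * ip S f q + b * ip S k q"
proof -
  have i1: "integrable lebesgue (\<lambda>x. indicator S x *\<^sub>R (f x * q x))"
    using L2_prod_int[OF f q] unfolding set_integrable_def .
  have i2: "integrable lebesgue (\<lambda>x. indicator S x *\<^sub>R (k x * q x))"
    using L2_prod_int[OF h q] unfolding set_integrable_def .
  have "ip S (\<lambda>x. a * f x + b * k x) q = (\<integral>x. a * (indicator S x *\<^sub>R (f x * q x)) + b * (indicator S x *\<^sub>R (k x * q x)) \<partial>lebesgue)"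
    unfolding ip_def set_lebesgue_integral_def
    by (rule Bochner_Integration.integral_cong) (auto simp: algebra_simps)
  also have "\<dots> = a * ip S f q + b * ip S k q"
    using i1 i2 unfolding ip_def set_lebesgue_integral_def by simp
  finally show ?thesis .
qed

lemma ip_sq_zero:
  assumes f: "L2 S f" and z: "ip S f f = 0"
  shows "AE x in lebesgue. x \<in> S \<longrightarrow> f x = 0"
proof -
  have fi: "integrable lebesgue (\<lambda>x. indicator S x *\<^sub>R (f x)\<^sup>2)"
    using f unfolding L2_def set_integrable_def by auto
  have "(\<integral>x. indicator S x *\<^sub>R (f x)\<^sup>2 \<partial>lebesgue) = 0"
    using z unfolding ip_def set_lebesgue_integral_def by (simp add: power2_eq_square)
  then have "AE x in lebesgue. indicator S x *\<^sub>R (f x)\<^sup>2 = 0"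
    using integral_nonneg_eq_0_iff_AE[OF fi] by (simp add: indicator_def)
  then show ?thesis by eventually_elim (auto simp: indicator_def)
qed

lemma P01_char:
  fixes l u g :: real
  assumes l: "0 < l" and u: "0 \<le> u" "u \<le> 1"
    and a: "u < 1 \<longrightarrow> 0 \<le> l * u - g" and b: "0 < u \<longrightarrow> l * u - g \<le> 0"
  shows "u = P01 (g / l)"
proof -
  consider "u = 0" | "u = 1" | "0 < u \<and> u < 1" using u by linarith
  then show ?thesis
  proof cases
    case 1
    then have "g / l \<le> 0" using a l by (simp add: divide_nonpos_pos)
    then show ?thesis using 1 by (simp add: P01_def)
  next
    case 2
    then have "1 \<le> g / l" using b l by (simp add: le_divide_eq)
    then show ?thesis using 2 by (simp add: P01_def)
  next
    case 3
    then have "g = l * u" using a b by simp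
    then have "g / l = u" using l by simp
    then show ?thesis using 3 by (simp add: P01_def)
  qed
qed

context
  fixes \<Omega> :: "'a::euclidean_space set" and \<gamma> g :: "'a \<Rightarrow> real"
  assumes Om_open: "open \<Omega>" and Om_bdd: "bounded \<Omega>"
    and g_borel[measurable]: "g \<in> borel_measurable borel" and g_nn: "\<And>x. 0 \<le> g x"
    and g_int: "integrable lborel g"
    and gam_g: "AE x in lebesgue. \<gamma> x = g x"
    and I_borel[measurable]: "interaction_dom \<Omega> \<gamma> \<in> sets borel"
    and I_bdd: "bounded (interaction_dom \<Omega> \<gamma>)"
begin

abbreviation "UU \<equiv> \<Omega> \<union> interaction_dom \<Omega> \<gamma>"

lemma gam_shift_int: "set_integrable lebesgue UU (\<lambda>y. \<gamma> (x - y))"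
proof -
  have [measurable]: "\<Omega> \<in> sets borel" using Om_open by auto
  have gi: "integrable lebesgue (\<lambda>y. g (x - y))"
    using g_shift_int[OF Om_open Om_bdd g_borel g_nn g_int gam_g I_borel I_bdd, of x]
    by (subst integrable_completion) measurable
  have Ub: "UU \<in> sets lebesgue" using Om_open by auto
  have gi2: "integrable lebesgue (\<lambda>y. indicator UU y *\<^sub>R g (x - y))"
    by (rule integrable_mult_indicator[OF Ub gi])
  have ae: "AE y in lebesgue. indicator UU y *\<^sub>R g (x - y) = indicator UU y *\<^sub>R \<gamma> (x - y)"
    using AE_reflect_lebesgue[OF gam_g, of x] by eventually_elim simp
  have m: "(\<lambda>y. indicator UU y *\<^sub>R g (x - y)) \<in> borel_measurable lebesgue"
    by (rule measurable_completion) measurable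
  show ?thesis unfolding set_integrable_def
    by (rule integrable_cong_AE_imp[OF gi2 lebesgue_meas_AE[OF m] ae])
       (use ae in \<open>auto elim: eventually_mono\<close>)
qed

lemma nonloc_ae:
  assumes vm: "(\<lambda>y. indicator UU y * v y) \<in> borel_measurable lebesgue"
    and vi: "integrable lebesgue (\<lambda>y. indicator UU y * v y)"
    and cg: "\<forall>x\<in>\<Omega>. c\<gamma> = (LINT y:UU|lebesgue. \<gamma> (x - y))"
  shows "AE x in lebesgue. x \<in> \<Omega> \<longrightarrow> nonloc \<gamma> UU v x = c\<gamma> * v x - conv \<gamma> UU v x"
  using conv_props(1)[OF Om_open Om_bdd g_borel g_nn g_int gam_g I_borel I_bdd vm vi]
proof eventually_elim
  case (elim x)
  show ?case
  proof
    assume x: "x \<in> \<Omega>"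
    have i1: "integrable lebesgue (\<lambda>y. indicator UU y *\<^sub>R \<gamma> (x - y))"
      using gam_shift_int[of x] unfolding set_integrable_def .
    have i2: "integrable lebesgue (\<lambda>y. indicator UU y *\<^sub>R (\<gamma> (x - y) * v y))"
      using elim unfolding set_integrable_def .
    have "nonloc \<gamma> UU v x = (\<integral>y. v x * (indicator UU y *\<^sub>R \<gamma> (x - y)) - indicator UU y *\<^sub>R (\<gamma> (x - y) * v y) \<partial>lebesgue)"
      unfolding nonloc_def set_lebesgue_integral_def
      by (rule Bochner_Integration.integral_cong) (auto simp: algebra_simps)
    also have "\<dots> = v x * (\<integral>y. indicator UU y *\<^sub>R \<gamma> (x - y) \<partial>lebesgue) - (\<integral>y. indicator UU y *\<^sub>R (\<gamma> (x - y) * v y) \<partial>lebesgue)"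
      using i1 i2 by simp
    also have "\<dots> = c\<gamma> * v x - conv \<gamma> UU v x"
      using cg x unfolding conv_def set_lebesgue_integral_def by simp
    finally show "nonloc \<gamma> UU v x = c\<gamma> * v x - conv \<gamma> UU v x" .
  qed
qed

lemma Kset_props:
  assumes "u \<in> Kset \<Omega> \<gamma>"
  shows "(\<lambda>y. indicator UU y * u y) \<in> borel_measurable lebesgue"
    and "integrable lebesgue (\<lambda>y. indicator UU y * u y)"
    and "(\<lambda>y. indicator \<Omega> y * u y) \<in> borel_measurable lebesgue"
    and "L2 \<Omega> u"
    and "AE x in lebesgue. x \<in> \<Omega> \<longrightarrow> 0 \<le> u x \<and> u x \<le> 1"
proof -
  have L: "L2 UU u" and b: "AE x in lebesgue. x \<in> \<Omega> \<longrightarrow> 0 \<le> u x \<and> u x \<le> 1"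
    using assms unfolding Kset_def V_B_def by auto
  then show "AE x in lebesgue. x \<in> \<Omega> \<longrightarrow> 0 \<le> u x \<and> u x \<le> 1" by simp
  have Ub: "UU \<in> sets lebesgue" and Ob[measurable]: "\<Omega> \<in> sets lebesgue" using Om_open by auto
  have Ufin: "emeasure lebesgue UU < \<infinity>"
    using bounded_set_imp_lmeasurable[OF _ Ub] Om_bdd I_bdd by (auto simp: fmeasurable_def)
  have um[measurable]: "(\<lambda>y. indicator UU y * u y) \<in> borel_measurable lebesgue"
    and u2: "integrable lebesgue (\<lambda>y. indicator UU y *\<^sub>R (u y)\<^sup>2)"
    using L unfolding L2_def set_integrable_def by auto
  then show "(\<lambda>y. indicator UU y * u y) \<in> borel_measurable lebesgue" by simp
  have iU: "integrable lebesgue (\<lambda>y. indicator UU y * (1::real))"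
    using integrable_real_indicator[OF Ub Ufin] by simp
  show "integrable lebesgue (\<lambda>y. indicator UU y * u y)"
  proof (rule Bochner_Integration.integrable_bound[OF Bochner_Integration.integrable_add[OF iU u2]])
    show "(\<lambda>y. indicator UU y * u y) \<in> borel_measurable lebesgue" by simp
    show "AE x in lebesgue. norm (indicator UU x * u x) \<le> norm (indicator UU x * 1 + indicator UU x *\<^sub>R (u x)\<^sup>2)"
    proof (intro AE_I2)
      fix x
      have "0 \<le> (\<bar>u x\<bar> - 1)\<^sup>2" by simp
      then have "2 * \<bar>u x\<bar> \<le> 1 + (u x)\<^sup>2"
        by (simp add: power2_eq_square algebra_simps abs_mult_self_eq)
      then have "\<bar>u x\<bar> \<le> 1 + (u x)\<^sup>2" by simp
      then show "norm (indicator UU x * u x) \<le> norm (indicator UU x * 1 + indicator UU x *\<^sub>R (u x)\<^sup>2)"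
        by (auto simp: indicator_def)
    qed
  qed
  have eqO: "(\<lambda>y. indicator \<Omega> y * u y) = (\<lambda>y. indicator \<Omega> y * (indicator UU y * u y))"
    by (auto simp: indicator_def fun_eq_iff)
  show Om: "(\<lambda>y. indicator \<Omega> y * u y) \<in> borel_measurable lebesgue"
    unfolding eqO by measurable
  show "L2 \<Omega> u"
    unfolding L2_def set_integrable_def
  proof
    show "(\<lambda>x. indicator \<Omega> x * u x) \<in> borel_measurable lebesgue" by (rule Om)
    have eq2: "(\<lambda>x. indicator \<Omega> x *\<^sub>R (u x)\<^sup>2) = (\<lambda>x. indicator \<Omega> x * (indicator UU x *\<^sub>R (u x)\<^sup>2))"
      by (auto simp: indicator_def fun_eq_iff)
    show "integrable lebesgue (\<lambda>x. indicator \<Omega> x *\<^sub>R (u x)\<^sup>2)"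
      unfolding eq2 using integrable_mult_indicator[OF Ob u2] by simp
  qed
qed

end




theorem corollary4p3:
  fixes \<Omega> :: "'a::euclidean_space set"
    and \<gamma> :: "'a \<Rightarrow> real" and \<gamma>h :: "real \<Rightarrow> real"
    and \<sigma> \<delta> c\<gamma> D L \<mu> cF \<tau> \<xi> Cm :: real
    and m m' :: "real \<Rightarrow> real"
  assumes dim: "DIM('a) \<le> 3"
    and dom_open: "open \<Omega>" and dom_conn: "connected \<Omega>" and dom_ne: "\<Omega> \<noteq> {}"
    and dom_bdd: "bounded \<Omega>"
    and gamma_nonneg: "\<forall>x. 0 \<le> \<gamma> x"
    and gamma_L1: "integrable lebesgue \<gamma>"
    and gamma_radial: "\<forall>x. \<gamma> x = \<gamma>h (norm x)"
    and sigma_pos: "0 < \<sigma>" and delta_pos: "0 < \<delta>"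
    and supp_lower: "{0<..<\<sigma>} \<subseteq> {r. \<gamma>h r \<noteq> 0}"
    and supp_upper: "{r. \<gamma>h r \<noteq> 0} \<subseteq> {0<..\<delta>}"
    and c_gamma: "\<forall>x\<in>\<Omega>. c\<gamma> = (LINT y:(\<Omega> \<union> interaction_dom \<Omega> \<gamma>)|lebesgue. \<gamma> (x - y))"
    and D_pos: "0 < D" and mu_pos: "0 < \<mu>" and cF_pos: "0 < cF" and tau_pos: "0 < \<tau>"
    and xi_def: "\<xi> = c\<gamma> - cF"
    and m_bound: "\<forall>s. \<bar>m s\<bar> \<le> 1/2"
    and m_deriv: "\<forall>s. (m has_real_derivative m' s) (at s)"
    and m'_bound: "\<forall>s. \<bar>m' s\<bar> \<le> Cm"
    and xi_nonneg: "0 \<le> \<xi>"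
  shows
    "(\<forall>\<theta>0 G0 u0 \<theta>1 G1 u1 w1.
        H1 \<Omega> \<theta>0 G0 \<and> u0 \<in> Kset \<Omega> \<gamma> \<and>
        H1 \<Omega> \<theta>1 G1 \<and> u1 \<in> Kset \<Omega> \<gamma> \<and> L2 \<Omega> w1 \<and>
        (\<forall>\<phi> G\<phi>. H1 \<Omega> \<phi> G\<phi> \<longrightarrow>
            ip \<Omega> (\<lambda>x. \<theta>1 x - \<theta>0 x) \<phi> + D * \<tau> * ip_grad \<Omega> G1 G\<phi>
              - L * ip \<Omega> (\<lambda>x. u1 x - u0 x) \<phi> = 0) \<and>
        (\<forall>\<psi>. L2 \<Omega> \<psi> \<longrightarrow> \<mu> * ip \<Omega> (\<lambda>x. u1 x - u0 x) \<psi> + \<tau> * ip \<Omega> w1 \<psi> = 0) \<and>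
        (\<forall>\<zeta>\<in>Kset \<Omega> \<gamma>.
            ip \<Omega> (\<lambda>x. nonloc \<gamma> (\<Omega> \<union> interaction_dom \<Omega> \<gamma>) u1 x - cF * u1 x + cF / 2
                        - cF * m (\<theta>0 x) - w1 x)
                 (\<lambda>x. \<zeta> x - u1 x) \<ge> 0)
      \<longrightarrow> (AE x in lebesgue. x \<in> \<Omega> \<longrightarrow>
            u1 x = P01 ((\<mu> / \<tau> * u0 x + conv \<gamma> (\<Omega> \<union> interaction_dom \<Omega> \<gamma>) u1 x
                         + cF * m (\<theta>0 x) - cF / 2) / (\<mu> / \<tau> + \<xi>))))
   \<and>
    (\<forall>u \<theta>.
        u \<in> Kset \<Omega> \<gamma> \<and> \<theta> \<in> borel_measurable (restrict_space lebesgue \<Omega>) \<and>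
        (\<forall>\<zeta>\<in>Kset \<Omega> \<gamma>.
            ip \<Omega> (\<lambda>x. nonloc \<gamma> (\<Omega> \<union> interaction_dom \<Omega> \<gamma>) u x - cF * u x + cF / 2
                        - cF * m (\<theta> x))
                 (\<lambda>x. \<zeta> x - u x) \<ge> 0)
      \<longrightarrow> (0 < \<xi> \<longrightarrow> (AE x in lebesgue. x \<in> \<Omega> \<longrightarrow>
              u x = P01 ((conv \<gamma> (\<Omega> \<union> interaction_dom \<Omega> \<gamma>) u x - cF / 2 + cF * m (\<theta> x)) / \<xi>)))
        \<and> (\<xi> = 0 \<and>
            {x \<in> \<Omega>. conv \<gamma> (\<Omega> \<union> interaction_dom \<Omega> \<gamma>) u x - cF / 2 + cF * m (\<theta> x) = 0}
              \<in> null_sets lebesgue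
           \<longrightarrow> (AE x in lebesgue. x \<in> \<Omega> \<longrightarrow> u x = 0 \<or> u x = 1)))"
proof -
  let ?I = "interaction_dom \<Omega> \<gamma>"
  let ?U = "\<Omega> \<union> interaction_dom \<Omega> \<gamma>"
  have \<gamma>m: "\<gamma> \<in> borel_measurable lebesgue" using gamma_L1 by (rule borel_measurable_integrable)
  obtain g0 where g0m: "g0 \<in> borel_measurable lborel" and g0ae: "AE x in lborel. \<gamma> x = g0 x"
    using completion_ex_borel_measurable_real[OF \<gamma>m] by blast
  have g0b[measurable]: "g0 \<in> borel_measurable borel" using g0m by simp
  define g where "g x = max 0 (g0 x)" for x
  have g_borel[measurable]: "g \<in> borel_measurable borel" unfolding g_def by measurable
  have g_nn: "\<And>x. 0 \<le> g x" by (simp add: g_def)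
  have gam_g: "AE x in lebesgue. \<gamma> x = g x"
  proof -
    have "AE x in lebesgue. \<gamma> x = g0 x" using g0ae by (simp add: AE_completion_iff)
    then show ?thesis
    proof eventually_elim
      case (elim x)
      then show ?case using gamma_nonneg[rule_format, of x] by (simp add: g_def)
    qed
  qed
  have glb: "g \<in> borel_measurable lborel" by measurable
  have "integrable lebesgue g"
    by (rule integrable_cong_AE_imp[OF gamma_L1 measurable_completion[OF glb] gam_g])
  then have g_int: "integrable lborel g"
    using integrable_completion[OF glb] by blast
  define W where "W = {y. \<exists>x\<in>\<Omega>. \<gamma> (x - y) \<noteq> 0}"
  have W_open: "open W"
    unfolding open_contains_ball
  proof
    fix y assume "y \<in> W"
    then obtain x where x: "x \<in> \<Omega>" "\<gamma> (x - y) \<noteq> 0" by (auto simp: W_def)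
    obtain e where e: "0 < e" "ball x e \<subseteq> \<Omega>" using dom_open x(1) open_contains_ball by blast
    have "ball y e \<subseteq> W"
    proof
      fix y' assume "y' \<in> ball y e"
      then have "x + (y' - y) \<in> ball x e" by (simp add: dist_norm norm_minus_commute)
      then have "x + (y' - y) \<in> \<Omega>" using e by blast
      moreover have "(x + (y' - y)) - y' = x - y" by simp
      ultimately show "y' \<in> W" using x(2) unfolding W_def
        by (intro CollectI bexI[of _ "x + (y' - y)"]) simp_all
    qed
    then show "\<exists>e>0. ball y e \<subseteq> W" using e(1) by blast
  qed
  have I_eq: "?I = W - \<Omega>" by (auto simp: interaction_dom_def W_def)
  have I_borel[measurable]: "?I \<in> sets borel"
    unfolding I_eq using W_open dom_open by (intro sets.Diff borel_open)
  obtain B where B: "\<And>x. x \<in> \<Omega> \<Longrightarrow> norm x \<le> B" using dom_bdd by (auto simp: bounded_iff)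
  have I_bdd: "bounded ?I"
    unfolding bounded_iff
  proof (intro exI ballI)
    fix y assume "y \<in> ?I"
    then obtain x where x: "x \<in> \<Omega>" "\<gamma> (x - y) \<noteq> 0" by (auto simp: interaction_dom_def)
    then have "\<gamma>h (norm (x - y)) \<noteq> 0" using gamma_radial by metis
    then have "norm (x - y) \<le> \<delta>" using supp_upper by auto
    moreover have "norm y \<le> norm x + norm (x - y)" using norm_triangle_ineq4[of x "x - y"] by simp
    ultimately show "norm y \<le> B + \<delta>" using B[OF x(1)] by linarith
  qed
  have Om_leb: "\<Omega> \<in> sets lebesgue" using dom_open by auto
  have Om_fin: "emeasure lebesgue \<Omega> < \<infinity>"
    using bounded_set_imp_lmeasurable[OF dom_bdd Om_leb] by (auto simp: fmeasurable_def)
  note facts = dom_open dom_bdd g_borel g_nn g_int gam_g I_borel I_bdd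
  note ext = extension[OF facts]
  have m_cont: "continuous_on UNIV m"
    by (rule continuous_at_imp_continuous_on) (use m_deriv DERIV_isCont in blast)
  have m_b[measurable]: "m \<in> borel_measurable borel" by (rule borel_measurable_continuous_onI[OF m_cont])
  have conv_R: "conv \<gamma> ?U v \<in> borel_measurable (restrict_space lebesgue \<Omega>)"
    if "(\<lambda>y. indicator ?U y * v y) \<in> borel_measurable lebesgue"
       "integrable lebesgue (\<lambda>y. indicator ?U y * v y)" for v
    using conv_props(2)[OF facts that] by (rule measurable_restrict_space1)
  have partA: "AE x in lebesgue. x \<in> \<Omega> \<longrightarrow>
            u1 x = P01 ((\<mu> / \<tau> * u0 x + conv \<gamma> ?U u1 x
                         + cF * m (\<theta>0 x) - cF / 2) / (\<mu> / \<tau> + \<xi>))"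
    if H0: "H1 \<Omega> \<theta>0 G0" and u0K: "u0 \<in> Kset \<Omega> \<gamma>" and u1K: "u1 \<in> Kset \<Omega> \<gamma>" and w1L: "L2 \<Omega> w1"
      and D2: "\<forall>\<psi>. L2 \<Omega> \<psi> \<longrightarrow> \<mu> * ip \<Omega> (\<lambda>x. u1 x - u0 x) \<psi> + \<tau> * ip \<Omega> w1 \<psi> = 0"
      and D3: "\<forall>\<zeta>\<in>Kset \<Omega> \<gamma>.
            ip \<Omega> (\<lambda>x. nonloc \<gamma> ?U u1 x - cF * u1 x + cF / 2 - cF * m (\<theta>0 x) - w1 x)
                 (\<lambda>x. \<zeta> x - u1 x) \<ge> 0"
    for \<theta>0 G0 u0 u1 w1
  proof -
    note u1P = Kset_props[OF facts u1K] and u0P = Kset_props[OF facts u0K]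
    have u1R[measurable]: "u1 \<in> borel_measurable (restrict_space lebesgue \<Omega>)"
      using u1P(3) rmeas_iff[OF Om_leb] by blast
    have u0R[measurable]: "u0 \<in> borel_measurable (restrict_space lebesgue \<Omega>)"
      using u0P(3) rmeas_iff[OF Om_leb] by blast
    have "L2 \<Omega> \<theta>0" using H0 by (simp add: H1_def)
    then have th0R[measurable]: "\<theta>0 \<in> borel_measurable (restrict_space lebesgue \<Omega>)"
      using rmeas_iff[OF Om_leb] by (simp add: L2_def)
    have cvR[measurable]: "conv \<gamma> ?U u1 \<in> borel_measurable (restrict_space lebesgue \<Omega>)"
      by (rule conv_R[OF u1P(1) u1P(2)])
    have aL: "L2 \<Omega> (\<lambda>x. u1 x - u0 x)"
      using L2_lin[OF u1P(4) u0P(4), of 1 "-1"] by simp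
    define \<psi> where "\<psi> = (\<lambda>x. \<tau> * w1 x + \<mu> * (u1 x - u0 x))"
    have \<psi>L: "L2 \<Omega> \<psi>" unfolding \<psi>_def by (rule L2_lin[OF w1L aL])
    have "ip \<Omega> \<psi> \<psi> = \<tau> * ip \<Omega> w1 \<psi> + \<mu> * ip \<Omega> (\<lambda>x. u1 x - u0 x) \<psi>"
      unfolding \<psi>_def[of] by (rule ip_lin[OF w1L aL \<psi>L[unfolded \<psi>_def]])
    also have "\<dots> = 0" using D2 \<psi>L by (simp add: add.commute)
    finally have "AE x in lebesgue. x \<in> \<Omega> \<longrightarrow> \<psi> x = 0"
      using ip_sq_zero[OF \<psi>L] by blast
    then have wae: "AE x in lebesgue. x \<in> \<Omega> \<longrightarrow> w1 x = - (\<mu> / \<tau>) * (u1 x - u0 x)"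
      by eventually_elim (use tau_pos in \<open>auto simp: \<psi>_def field_simps\<close>)
    define Fa where "Fa x = (\<mu> / \<tau> + \<xi>) * u1 x - (\<mu> / \<tau> * u0 x + conv \<gamma> ?U u1 x + cF * m (\<theta>0 x) - cF / 2)" for x
    have FaR: "Fa \<in> borel_measurable (restrict_space lebesgue \<Omega>)" unfolding Fa_def by measurable
    have Fam: "(\<lambda>x. indicator \<Omega> x * Fa x) \<in> borel_measurable lebesgue"
      using FaR rmeas_iff[OF Om_leb] by blast
    have FF: "AE x in lebesgue. x \<in> \<Omega> \<longrightarrow>
        nonloc \<gamma> ?U u1 x - cF * u1 x + cF / 2 - cF * m (\<theta>0 x) - w1 x = Fa x"
      using wae nonloc_ae[OF facts u1P(1) u1P(2) c_gamma]
      by eventually_elim (auto simp: Fa_def xi_def algebra_simps)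
    have L: "AE x in lebesgue. x \<in> \<Omega> \<longrightarrow> (u1 x < 1 \<longrightarrow> 0 \<le> Fa x) \<and> (0 < u1 x \<longrightarrow> Fa x \<le> 0)"
      by (rule loc[OF Om_leb Om_fin ext u1P(3) u1P(5) Fam FF D3])
    have lpos: "0 < \<mu> / \<tau> + \<xi>" using mu_pos tau_pos xi_nonneg by (simp add: add_pos_nonneg)
    show ?thesis
      using L u1P(5)
    proof eventually_elim
      case (elim x)
      show ?case
      proof
        assume x: "x \<in> \<Omega>"
        show "u1 x = P01 ((\<mu> / \<tau> * u0 x + conv \<gamma> ?U u1 x + cF * m (\<theta>0 x) - cF / 2) / (\<mu> / \<tau> + \<xi>))"
          by (rule P01_char[OF lpos]) (use elim x in \<open>auto simp: Fa_def\<close>)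
      qed
    qed
  qed
  have partB: "AE x in lebesgue. x \<in> \<Omega> \<longrightarrow> (u x < 1 \<longrightarrow> 0 \<le> \<xi> * u x - (conv \<gamma> ?U u x - cF / 2 + cF * m (\<theta> x)))
        \<and> (0 < u x \<longrightarrow> \<xi> * u x - (conv \<gamma> ?U u x - cF / 2 + cF * m (\<theta> x)) \<le> 0) \<and> 0 \<le> u x \<and> u x \<le> 1"
    if uK: "u \<in> Kset \<Omega> \<gamma>" and thR[measurable]: "\<theta> \<in> borel_measurable (restrict_space lebesgue \<Omega>)"
      and VI: "\<forall>\<zeta>\<in>Kset \<Omega> \<gamma>.
            ip \<Omega> (\<lambda>x. nonloc \<gamma> ?U u x - cF * u x + cF / 2 - cF * m (\<theta> x))
                 (\<lambda>x. \<zeta> x - u x) \<ge> 0"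
    for u \<theta>
  proof -
    note uP = Kset_props[OF facts uK]
    have uR[measurable]: "u \<in> borel_measurable (restrict_space lebesgue \<Omega>)"
      using uP(3) rmeas_iff[OF Om_leb] by blast
    have cvR[measurable]: "conv \<gamma> ?U u \<in> borel_measurable (restrict_space lebesgue \<Omega>)"
      by (rule conv_R[OF uP(1) uP(2)])
    define Fa where "Fa x = \<xi> * u x - (conv \<gamma> ?U u x - cF / 2 + cF * m (\<theta> x))" for x
    have FaR: "Fa \<in> borel_measurable (restrict_space lebesgue \<Omega>)" unfolding Fa_def by measurable
    have Fam: "(\<lambda>x. indicator \<Omega> x * Fa x) \<in> borel_measurable lebesgue"
      using FaR rmeas_iff[OF Om_leb] by blast
    have FF: "AE x in lebesgue. x \<in> \<Omega> \<longrightarrow>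
        nonloc \<gamma> ?U u x - cF * u x + cF / 2 - cF * m (\<theta> x) = Fa x"
      using nonloc_ae[OF facts uP(1) uP(2) c_gamma]
      by eventually_elim (auto simp: Fa_def xi_def algebra_simps)
    have L: "AE x in lebesgue. x \<in> \<Omega> \<longrightarrow> (u x < 1 \<longrightarrow> 0 \<le> Fa x) \<and> (0 < u x \<longrightarrow> Fa x \<le> 0)"
      by (rule loc[OF Om_leb Om_fin ext uP(3) uP(5) Fam FF VI])
    show ?thesis using L uP(5) by eventually_elim (simp add: Fa_def)
  qed
  show ?thesis
  proof (intro conjI allI impI)
    fix \<theta>0 G0 u0 \<theta>1 G1 u1 w1
    assume "H1 \<Omega> \<theta>0 G0 \<and> u0 \<in> Kset \<Omega> \<gamma> \<and>
        H1 \<Omega> \<theta>1 G1 \<and> u1 \<in> Kset \<Omega> \<gamma> \<and> L2 \<Omega> w1 \<and>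
        (\<forall>\<phi> G\<phi>. H1 \<Omega> \<phi> G\<phi> \<longrightarrow>
            ip \<Omega> (\<lambda>x. \<theta>1 x - \<theta>0 x) \<phi> + D * \<tau> * ip_grad \<Omega> G1 G\<phi>
              - L * ip \<Omega> (\<lambda>x. u1 x - u0 x) \<phi> = 0) \<and>
        (\<forall>\<psi>. L2 \<Omega> \<psi> \<longrightarrow> \<mu> * ip \<Omega> (\<lambda>x. u1 x - u0 x) \<psi> + \<tau> * ip \<Omega> w1 \<psi> = 0) \<and>
        (\<forall>\<zeta>\<in>Kset \<Omega> \<gamma>.
            ip \<Omega> (\<lambda>x. nonloc \<gamma> ?U u1 x - cF * u1 x + cF / 2
                        - cF * m (\<theta>0 x) - w1 x)
                 (\<lambda>x. \<zeta> x - u1 x) \<ge> 0)"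
    then show "AE x in lebesgue. x \<in> \<Omega> \<longrightarrow>
            u1 x = P01 ((\<mu> / \<tau> * u0 x + conv \<gamma> ?U u1 x
                         + cF * m (\<theta>0 x) - cF / 2) / (\<mu> / \<tau> + \<xi>))"
      using partA by blast
  next
    fix u \<theta>
    assume A: "u \<in> Kset \<Omega> \<gamma> \<and> \<theta> \<in> borel_measurable (restrict_space lebesgue \<Omega>) \<and>
        (\<forall>\<zeta>\<in>Kset \<Omega> \<gamma>.
            ip \<Omega> (\<lambda>x. nonloc \<gamma> ?U u x - cF * u x + cF / 2 - cF * m (\<theta> x))
                 (\<lambda>x. \<zeta> x - u x) \<ge> 0)"
      and xp: "0 < \<xi>"
    have P: "AE x in lebesgue. x \<in> \<Omega> \<longrightarrow> (u x < 1 \<longrightarrow> 0 \<le> \<xi> * u x - (conv \<gamma> ?U u x - cF / 2 + cF * m (\<theta> x)))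
        \<and> (0 < u x \<longrightarrow> \<xi> * u x - (conv \<gamma> ?U u x - cF / 2 + cF * m (\<theta> x)) \<le> 0) \<and> 0 \<le> u x \<and> u x \<le> 1"
      using partB A by blast
    show "AE x in lebesgue. x \<in> \<Omega> \<longrightarrow> u x = P01 ((conv \<gamma> ?U u x - cF / 2 + cF * m (\<theta> x)) / \<xi>)"
      using P
    proof eventually_elim
      case (elim x)
      show ?case
      proof
        assume x: "x \<in> \<Omega>"
        show "u x = P01 ((conv \<gamma> ?U u x - cF / 2 + cF * m (\<theta> x)) / \<xi>)"
          by (rule P01_char[OF xp]) (use elim x in auto)
      qed
    qed
  next
    fix u \<theta>
    assume A: "u \<in> Kset \<Omega> \<gamma> \<and> \<theta> \<in> borel_measurable (restrict_space lebesgue \<Omega>) \<and>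
        (\<forall>\<zeta>\<in>Kset \<Omega> \<gamma>.
            ip \<Omega> (\<lambda>x. nonloc \<gamma> ?U u x - cF * u x + cF / 2 - cF * m (\<theta> x))
                 (\<lambda>x. \<zeta> x - u x) \<ge> 0)"
      and Z: "\<xi> = 0 \<and>
            {x \<in> \<Omega>. conv \<gamma> ?U u x - cF / 2 + cF * m (\<theta> x) = 0} \<in> null_sets lebesgue"
    have P: "AE x in lebesgue. x \<in> \<Omega> \<longrightarrow> (u x < 1 \<longrightarrow> 0 \<le> \<xi> * u x - (conv \<gamma> ?U u x - cF / 2 + cF * m (\<theta> x)))
        \<and> (0 < u x \<longrightarrow> \<xi> * u x - (conv \<gamma> ?U u x - cF / 2 + cF * m (\<theta> x)) \<le> 0) \<and> 0 \<le> u x \<and> u x \<le> 1"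
      using partB A by blast
    have "AE x in lebesgue. x \<notin> {x \<in> \<Omega>. conv \<gamma> ?U u x - cF / 2 + cF * m (\<theta> x) = 0}"
      using Z by (intro AE_not_in) simp
    with P show "AE x in lebesgue. x \<in> \<Omega> \<longrightarrow> u x = 0 \<or> u x = 1"
    proof eventually_elim
      case (elim x)
      show ?case
      proof
        assume x: "x \<in> \<Omega>"
        then have ne: "conv \<gamma> ?U u x - cF / 2 + cF * m (\<theta> x) \<noteq> 0" using elim(2) by simp
        have "\<not> (0 < u x \<and> u x < 1)"
        proof
          assume "0 < u x \<and> u x < 1"
          then show False using elim(1) x ne Z by auto
        qed
        then show "u x = 0 \<or> u x = 1" using elim(1) x by auto
      qed
    qed
  qed
qed


end
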